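(* Let $\mathcal{G}=([N],[M],\mathsf{E})$ be an $(N,M,D,K,A)$-bipartite expander with $2A\ge D$, and let $\mathbf{H}_M$ be a Hadamard matrix of order $M$. Let $\mathbf{Q}\in\mathbb{R}^{MD\times N}$ be the pooling matrix constructed from $\mathcal{G}$ and $\mathbf{H}_M$ (as described in the context). Then for every $\bm{z}\in\{0,\pm1\}^N$ with $\lVert\bm{z}\rVert_0\le K$, \[ \lVert\mathbf{Q}\bm{z}\rVert_2^2\ \ge\ M(2A-D)\,\lVert\bm{z}\rVert_0, \qquad\text{and consequently}\qquad \lVert\mathbf{Q}\bm{z}\rVert_\infty\ \ge\ \sqrt{\tfrac{2A-D}{D}\,\lVert\bm{z}\rVert_0}. \]
   Context: A bipartite graph $\mathcal{G}=(\mathsf{L},\mathsf{R},\mathsf{E})$ with $\mathsf{L}=[N]=\{1,\dots,N\}$, $\mathsf{R}=[M]$ and edge set $\mathsf{E}\subseteq[N]\times[M]$ is left-$D$-regular if every left vertex $i$ has exactly $D$ neighbours; $\Gamma(i)$ denotes the set of neighbours of $i$ and $\Gamma(S)=\bigcup_{i\in S}\Gamma(i)$. It is an $(N,M,D,K,A)$-bipartite expander if it is left-$D$-regular and $|\Gamma(S)|\ge A|S|$ for every $S\subseteq[N]$ with $|S|\le K$. The induced matrix $\mathbf{B}_{\mathcal{G}}\in\{0,1\}^{M\times N}$ has $(j,i)$-entry $1$ iff $(i,j)\in\mathsf{E}$ (so each column has exactly $D$ ones). A Hadamard matrix of order $M$ is an $M\times M$ matrix $\mathbf{H}_M$ with entries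 $\pm1$ and $\mathbf{H}_M^{\intercal}\mathbf{H}_M=M\mathbf{I}$. Construction of $\mathbf{Q}$: write $\mathbf{B}_{\mathcal{G}}=\sum_{i=1}^D\mathbf{B}_i$ with each $\mathbf{B}_i\in\{0,1\}^{M\times N}$ having exactly one nonzero entry in each column (i.e. distribute the $D$ ones of each column among the $D$ matrices, one each); set $\mathbf{D}_i=\mathbf{H}_M\mathbf{B}_i$ and $\mathbf{Q}=\begin{bmatrix}\mathbf{D}_1\\ \vdots\\ \mathbf{D}_D\end{bmatrix}$. $\lVert\cdot\rVert_0$ counts nonzero entries. *)

theory Defs
  imports Complex_Main
begin

text \<open>Matrices are functions nat \<Rightarrow> nat \<Rightarrow> real,
 indexed from 1 (row index first).\<close>

definition nbhd :: "(nat \<times> nat) set \<Rightarrow> nat set \<Rightarrow> nat set" where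
  "nbhd E S = {j. \<exists>i\<in>S. (i, j) \<in> E}"

definition left_regular :: "nat \<Rightarrow> nat \<Rightarrow> nat \<Rightarrow> (nat \<times> nat) set \<Rightarrow> bool" where
  "left_regular N M D E \<longleftrightarrow> E \<subseteq> {1..N} \<times> {1..M} \<and>
     (\<forall>i\<in>{1..N}. card (nbhd E {i}) = D)"

definition bipartite_expander ::
  "nat \<Rightarrow> nat \<Rightarrow> nat \<Rightarrow> nat \<Rightarrow> real \<Rightarrow> (nat \<times> nat) set \<Rightarrow> bool" where
  "bipartite_expander N M D K A E \<longleftrightarrow> left_regular N M D E \<and>
     (\<forall>S. S \<subseteq> {1..N} \<and> card S \<le> K \<longrightarrow> real (card (nbhd E S)) \<ge> A * real (card S))"

definition induced_matrix :: "(nat \<times> nat) set \<Rightarrow> nat \<Rightarrow> nat \<Rightarrow> real" where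
  "induced_matrix E j i = (if (i, j) \<in> E then 1 else 0)"

definition hadamard :: "nat \<Rightarrow> (nat \<Rightarrow> nat \<Rightarrow> real) \<Rightarrow> bool" where
  "hadamard M H \<longleftrightarrow> (\<forall>j\<in>{1..M}. \<forall>k\<in>{1..M}. H j k = 1 \<or> H j k = -1) \<and>
     (\<forall>i\<in>{1..M}. \<forall>k\<in>{1..M}.
        (\<Sum>j=1..M. H j i * H j k) = (if i = k then real M else 0))"

definition valid_split ::
  "nat \<Rightarrow> nat \<Rightarrow> nat \<Rightarrow> (nat \<times> nat) set \<Rightarrow> (nat \<Rightarrow> nat \<Rightarrow> nat \<Rightarrow> real) \<Rightarrow> bool" where
  "valid_split N M D E B \<longleftrightarrow>
     (\<forall>l\<in>{1..D}. \<forall>j\<in>{1..M}. \<forall>i\<in>{1..N}. B l j i = 0 \<or> B l j i = 1) \<and>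
     (\<forall>l\<in>{1..D}. \<forall>i\<in>{1..N}. card {j\<in>{1..M}. B l j i \<noteq> 0} = 1) \<and>
     (\<forall>j\<in>{1..M}. \<forall>i\<in>{1..N}. (\<Sum>l=1..D. B l j i) = induced_matrix E j i)"

text \<open>Pooling matrix Q (MD x N): row (l-1)*M + j of Q is row j of D_l = H_M B_l.\<close>
definition pooling_matrix ::
  "nat \<Rightarrow> (nat \<Rightarrow> nat \<Rightarrow> real) \<Rightarrow> (nat \<Rightarrow> nat \<Rightarrow> nat \<Rightarrow> real) \<Rightarrow> nat \<Rightarrow> nat \<Rightarrow> real" where
  "pooling_matrix M H B r i =
     (let l = (r - 1) div M + 1; j = (r - 1) mod M + 1 in (\<Sum>k=1..M. H j k * B l k i))"

definition mat_vec :: "nat \<Rightarrow> (nat \<Rightarrow> nat \<Rightarrow> real) \<Rightarrow> (nat \<Rightarrow> real) \<Rightarrow> nat \<Rightarrow> real" where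
  "mat_vec N Q z r = (\<Sum>i=1..N. Q r i * z i)"

definition l0_norm :: "nat \<Rightarrow> (nat \<Rightarrow> real) \<Rightarrow> nat" where
  "l0_norm N z = card {i\<in>{1..N}. z i \<noteq> 0}"

definition l2_norm_sq :: "nat \<Rightarrow> (nat \<Rightarrow> real) \<Rightarrow> real" where
  "l2_norm_sq n y = (\<Sum>r=1..n. (y r)^2)"

definition linf_norm :: "nat \<Rightarrow> (nat \<Rightarrow> real) \<Rightarrow> real" where
  "linf_norm n y = Max (insert 0 ((\<lambda>r. \<bar>y r\<bar>) ` {1..n}))"

end

theory Submission
  imports Defs
begin

lemma sum_blocks:
  fixes g :: "nat \<Rightarrow> real"
  shows "(\<Sum>r=1..M*D. g r) = (\<Sum>l=1..D. \<Sum>j=1..M. g ((l-1)*M + j))"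
proof (induction D)
  case 0
  show ?case by simp
next
  case (Suc D)
  have U: "{1..M*Suc D} = {1..M*D} \<union> {1+M*D..M+M*D}" by auto
  have "(\<Sum>r=1..M*Suc D. g r) = (\<Sum>r=1..M*D. g r) + (\<Sum>r\<in>{1+M*D..M+M*D}. g r)"
    unfolding U by (rule sum.union_disjoint) auto
  also have "(\<Sum>r\<in>{1+M*D..M+M*D}. g r) = (\<Sum>j=1..M. g (j + M*D))"
    by (rule sum.shift_bounds_cl_nat_ivl)
  also have "\<dots> = (\<Sum>j=1..M. g ((Suc D - 1)*M + j))"
    by (simp add: add.commute mult.commute)
  finally show ?case using Suc by simp
qed

lemma had_norm:
  fixes y :: "nat \<Rightarrow> real"
  assumes "hadamard M H"
  shows "(\<Sum>j=1..M. (\<Sum>k=1..M. H j k * y k)^2) = real M * (\<Sum>k=1..M. (y k)^2)"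
proof -
  have "(\<Sum>j=1..M. (\<Sum>k=1..M. H j k * y k)^2)
     = (\<Sum>j=1..M. \<Sum>k=1..M. \<Sum>k'=1..M. H j k * y k * (H j k' * y k'))"
    by (simp add: power2_eq_square sum_product)
  also have "\<dots> = (\<Sum>k=1..M. \<Sum>j=1..M. \<Sum>k'=1..M. H j k * y k * (H j k' * y k'))"
    by (rule sum.swap)
  also have "\<dots> = (\<Sum>k=1..M. \<Sum>k'=1..M. \<Sum>j=1..M. H j k * y k * (H j k' * y k'))"
    by (rule sum.cong[OF refl], rule sum.swap)
  also have "\<dots> = (\<Sum>k=1..M. \<Sum>k'=1..M. y k * y k' * (\<Sum>j=1..M. H j k * H j k'))"
    by (simp add: sum_distrib_left mult_ac)
  also have "\<dots> = (\<Sum>k=1..M. \<Sum>k'=1..M. (if k = k' then y k * y k' * real M else 0))"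
    using assms unfolding hadamard_def by (intro sum.cong refl) auto
  also have "\<dots> = (\<Sum>k=1..M. y k * y k * real M)"
    by (intro sum.cong refl) (simp add: sum.delta)
  finally show ?thesis by (simp add: sum_distrib_left power2_eq_square mult_ac)
qed

theorem mainTheorem2:
  fixes N M D K :: nat and A :: real and E :: "(nat \<times> nat) set"
    and H :: "nat \<Rightarrow> nat \<Rightarrow> real" and B :: "nat \<Rightarrow> nat \<Rightarrow> nat \<Rightarrow> real"
    and z :: "nat \<Rightarrow> real"
  assumes "bipartite_expander N M D K A E"
    and "2 * A \<ge> real D"
    and "hadamard M H"
    and "valid_split N M D E B"
    and "\<forall>i\<in>{1..N}. z i \<in> {-1, 0, 1}"
    and "l0_norm N z \<le> K"
  shows "l2_norm_sq (M * D) (mat_vec N (pooling_matrix M H B) z)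
           \<ge> real M * (2 * A - real D) * real (l0_norm N z)
     \<and> linf_norm (M * D) (mat_vec N (pooling_matrix M H B) z)
           \<ge> sqrt ((2 * A - real D) / real D * real (l0_norm N z))"
proof -
  define v where "v = mat_vec N (pooling_matrix M H B) z"
  define y where "y = (\<lambda>l k. \<Sum>i=1..N. B l k i * z i)"
  define S where "S = {i\<in>{1..N}. z i \<noteq> 0}"
  define s where "s = card S"
  have s_def': "l0_norm N z = s" unfolding s_def S_def l0_norm_def by simp
  have Efin: "E \<subseteq> {1..N} \<times> {1..M}" and reg: "\<forall>i\<in>{1..N}. card (nbhd E {i}) = D"
    using assms(1) unfolding bipartite_expander_def left_regular_def by auto
  have Sfin: "finite S" and SN: "S \<subseteq> {1..N}" unfolding S_def by auto
  have expand: "real (card (nbhd E S)) \<ge> A * real s"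
  proof -
    have "card S \<le> K" using assms(6) s_def' s_def by simp
    then show ?thesis using assms(1) SN unfolding bipartite_expander_def s_def by auto
  qed
  have B01: "\<forall>l\<in>{1..D}. \<forall>j\<in>{1..M}. \<forall>i\<in>{1..N}. B l j i = 0 \<or> B l j i = 1"
   and Bsum: "\<forall>j\<in>{1..M}. \<forall>i\<in>{1..N}. (\<Sum>l=1..D. B l j i) = induced_matrix E j i"
    using assms(4) unfolding valid_split_def by auto
  have v_eq: "v ((l-1)*M + j) = (\<Sum>k=1..M. H j k * y l k)"
    if l: "l \<in> {1..D}" and j: "j \<in> {1..M}" for l j
  proof -
    have Mpos: "M > 0" using j by auto
    have d: "((l-1)*M + j - 1) div M + 1 = l" and m: "((l-1)*M + j - 1) mod M + 1 = j"
    proof -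
      have e: "(l-1)*M + j - 1 = (j-1) + (l-1)*M" using j by auto
      have "(j-1) div M = 0" "(j-1) mod M = j - 1" using j by auto
      moreover have "((l-1)*M + j - 1) div M = (j-1) div M + (l-1)"
        unfolding e using Mpos by (subst div_mult_self1) auto
      moreover have "((l-1)*M + j - 1) mod M = (j-1) mod M"
        unfolding e by (rule mod_mult_self1)
      ultimately show "((l-1)*M + j - 1) div M + 1 = l" "((l-1)*M + j - 1) mod M + 1 = j"
        using l j by simp_all
    qed
    have "v ((l-1)*M + j) = (\<Sum>i=1..N. (\<Sum>k=1..M. H j k * B l k i) * z i)"
      unfolding v_def mat_vec_def pooling_matrix_def Let_def d m by simp
    also have "\<dots> = (\<Sum>i=1..N. \<Sum>k=1..M. H j k * (B l k i * z i))"
      by (intro sum.cong refl) (simp add: sum_distrib_right mult.assoc)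
    also have "\<dots> = (\<Sum>k=1..M. \<Sum>i=1..N. H j k * (B l k i * z i))"
      by (rule sum.swap)
    also have "\<dots> = (\<Sum>k=1..M. H j k * y l k)"
      unfolding y_def by (simp add: sum_distrib_left)
    finally show ?thesis .
  qed
  have l2_eq: "l2_norm_sq (M * D) v = real M * (\<Sum>l=1..D. \<Sum>k=1..M. (y l k)^2)"
  proof -
    have "l2_norm_sq (M * D) v = (\<Sum>l=1..D. \<Sum>j=1..M. (v ((l-1)*M + j))^2)"
      unfolding l2_norm_sq_def by (rule sum_blocks)
    also have "\<dots> = (\<Sum>l=1..D. \<Sum>j=1..M. (\<Sum>k=1..M. H j k * y l k)^2)"
      using v_eq by (intro sum.cong refl) auto
    also have "\<dots> = (\<Sum>l=1..D. real M * (\<Sum>k=1..M. (y l k)^2))"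
      using had_norm[OF assms(3)] by (intro sum.cong refl) auto
    finally show ?thesis by (simp add: sum_distrib_left)
  qed
  define G where "G = nbhd E S"
  define c where "c = (\<lambda>k. card {i\<in>S. (i,k)\<in>E})"
  define U where "U = {k\<in>G. c k = 1}"
  have GM: "G \<subseteq> {1..M}" using Efin unfolding G_def nbhd_def by auto
  have Gfin: "finite G" using GM finite_subset by blast
  have UG: "U \<subseteq> G" unfolding U_def by auto
  have uniq: "(\<Sum>l=1..D. (y l k)^2) = 1" if k: "k \<in> U" for k
  proof -
    have kM: "k \<in> {1..M}" using k UG GM by auto
    obtain i0 where i0: "{i\<in>S. (i,k)\<in>E} = {i0}"
    proof -
      have "card {i\<in>S. (i,k)\<in>E} = 1" using k unfolding U_def c_def by simp
      then show ?thesis using that by (rule card_1_singletonE)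
    qed
    have i0S: "i0 \<in> S" and i0E: "(i0,k) \<in> E" using i0 by auto
    have i0N: "i0 \<in> {1..N}" using i0S SN by auto
    have "z i0 = -1 \<or> z i0 = 1" using assms(5) i0N i0S unfolding S_def by auto
    then have z0: "(z i0)^2 = 1" by auto
    have zero: "B l k i * z i = 0" if l: "l \<in> {1..D}" and i: "i \<in> {1..N}" "i \<noteq> i0" for l i
    proof (cases "z i = 0")
      case False
      then have "i \<in> S" using i unfolding S_def by auto
      then have "(i,k) \<notin> E" using i0 i by auto
      then have "(\<Sum>l=1..D. B l k i) = 0" using Bsum kM i unfolding induced_matrix_def by auto
      moreover have "\<forall>l\<in>{1..D}. B l k i \<ge> 0" using B01 kM i by force
      ultimately have "B l k i = 0" using l by (subst (asm) sum_nonneg_eq_0_iff) auto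
      then show ?thesis by simp
    qed simp
    have yl: "y l k = B l k i0 * z i0" if l: "l \<in> {1..D}" for l
    proof -
      have "y l k = (\<Sum>i\<in>{i0}. B l k i * z i)"
        unfolding y_def
        by (rule sum.mono_neutral_right) (use i0N zero[OF l] in auto)
      then show ?thesis by simp
    qed
    have "(\<Sum>l=1..D. (y l k)^2) = (\<Sum>l=1..D. B l k i0)"
    proof (intro sum.cong refl)
      fix l assume l: "l \<in> {1..D}"
      have "B l k i0 = 0 \<or> B l k i0 = 1" using B01 l kM i0N by auto
      then show "(y l k)^2 = B l k i0" using yl[OF l] z0 by (auto simp: power_mult_distrib power2_eq_square)
    qed
    also have "\<dots> = 1" using Bsum kM i0N i0E unfolding induced_matrix_def by auto
    finally show ?thesis .
  qed
  have sumU: "(\<Sum>l=1..D. \<Sum>k=1..M. (y l k)^2) \<ge> real (card U)"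
  proof -
    have "real (card U) = (\<Sum>k\<in>U. \<Sum>l=1..D. (y l k)^2)" using uniq by simp
    also have "\<dots> \<le> (\<Sum>k=1..M. \<Sum>l=1..D. (y l k)^2)"
      by (rule sum_mono2) (use UG GM in \<open>auto intro: sum_nonneg\<close>)
    also have "\<dots> = (\<Sum>l=1..D. \<Sum>k=1..M. (y l k)^2)" by (rule sum.swap)
    finally show ?thesis .
  qed
  have dc: "(\<Sum>k\<in>G. c k) = D * s"
  proof -
    have "(\<Sum>k\<in>G. c k) = (\<Sum>k\<in>G. \<Sum>i\<in>S. if (i,k)\<in>E then 1 else 0)"
    proof (intro sum.cong refl)
      fix k
      have "c k = (\<Sum>i\<in>{i\<in>S. (i,k)\<in>E}. 1)" unfolding c_def by (rule card_eq_sum)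
      also have "\<dots> = (\<Sum>i\<in>S. if (i,k)\<in>E then 1 else 0)" by (rule sum.inter_filter[OF Sfin])
      finally show "c k = (\<Sum>i\<in>S. if (i,k)\<in>E then 1 else 0)" .
    qed
    also have "\<dots> = (\<Sum>i\<in>S. \<Sum>k\<in>G. if (i,k)\<in>E then 1 else 0)" by (rule sum.swap)
    also have "\<dots> = (\<Sum>i\<in>S. D)"
    proof (intro sum.cong refl)
      fix i assume i: "i \<in> S"
      have "nbhd E {i} = {k\<in>G. (i,k)\<in>E}" using i unfolding G_def nbhd_def by auto
      moreover have "card (nbhd E {i}) = D" using reg i SN by blast
      ultimately have "card {k\<in>G. (i,k)\<in>E} = D" by simp
      then show "(\<Sum>k\<in>G. if (i,k)\<in>E then 1 else 0) = D"
        using sum.inter_filter[OF Gfin, of "\<lambda>_. 1::nat" "\<lambda>k. (i,k)\<in>E", symmetric]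
        by simp
    qed
    finally show ?thesis unfolding s_def by simp
  qed
  have cnt: "real (card U) \<ge> 2 * real (card G) - real D * real s"
  proof -
    have c1: "c k \<ge> 1" if kG: "k \<in> G" for k
    proof -
      obtain i where "i \<in> S" "(i,k) \<in> E" using kG unfolding G_def nbhd_def by auto
      then have "{i\<in>S. (i,k)\<in>E} \<noteq> {}" by auto
      then show ?thesis unfolding c_def using Sfin
        by (simp add: Suc_le_eq card_gt_0_iff)
    qed
    have "(\<Sum>k\<in>G. real (c k)) = (\<Sum>k\<in>U. real (c k)) + (\<Sum>k\<in>G - U. real (c k))"
      using sum.subset_diff[OF UG Gfin] by (simp add: add.commute)
    also have "(\<Sum>k\<in>U. real (c k)) = real (card U)" unfolding U_def by simp
    also have "(\<Sum>k\<in>G - U. real (c k)) \<ge> (\<Sum>k\<in>G - U. 2)"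
    proof (rule sum_mono)
      fix k assume "k \<in> G - U"
      then have "c k \<ge> 1" "c k \<noteq> 1" using c1 unfolding U_def by auto
      then show "2 \<le> real (c k)" by simp
    qed
    moreover have "(\<Sum>k\<in>G - U. (2::real)) = 2 * (real (card G) - real (card U))"
      using card_Diff_subset[OF finite_subset[OF UG Gfin] UG] card_mono[OF Gfin UG] by simp
    moreover have "(\<Sum>k\<in>G. real (c k)) = real D * real s"
    proof -
      have "real (\<Sum>k\<in>G. c k) = real (D * s)" using dc by simp
      then show ?thesis by simp
    qed
    ultimately show ?thesis by (smt (verit))
  qed
  have l2: "l2_norm_sq (M * D) v \<ge> real M * (2 * A - real D) * real s"
  proof -
    have "(2 * A - real D) * real s \<le> real (card U)"
      using cnt expand unfolding G_def by (simp add: algebra_simps)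
    also have "\<dots> \<le> (\<Sum>l=1..D. \<Sum>k=1..M. (y l k)^2)" by (rule sumU)
    finally have "real M * ((2 * A - real D) * real s) \<le> real M * (\<Sum>l=1..D. \<Sum>k=1..M. (y l k)^2)"
      by (rule mult_left_mono) simp
    then show ?thesis unfolding l2_eq by (simp add: mult_ac)
  qed
  define L where "L = linf_norm (M * D) v"
  have L0: "L \<ge> 0" unfolding L_def linf_norm_def by simp
  have Lge: "\<bar>v r\<bar> \<le> L" if "r \<in> {1..M*D}" for r
    unfolding L_def linf_norm_def using that by (intro Max_ge) auto
  have l2L: "l2_norm_sq (M * D) v \<le> real (M * D) * L^2"
  proof -
    have "l2_norm_sq (M * D) v \<le> real (card {1..M*D}) * L^2"
      unfolding l2_norm_sq_def
    proof (rule sum_bounded_above)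
      fix r assume "r \<in> {1..M*D}"
      then have "\<bar>v r\<bar> \<le> L" by (rule Lge)
      then have "\<bar>v r\<bar>^2 \<le> L^2" by (rule power_mono) simp
      then show "(v r)^2 \<le> L^2" by simp
    qed
    then show ?thesis by simp
  qed
  have X: "(2 * A - real D) / real D * real s \<le> L^2"
  proof (cases "M * D = 0")
    case True
    show ?thesis
    proof (cases "D = 0")
      case True then show ?thesis by simp
    next
      case False
      then have "M = 0" using \<open>M*D = 0\<close> by simp
      then have "G = {}" using GM by auto
      then have "A * real s \<le> 0" using expand unfolding G_def by simp
      moreover have "A > 0" using False assms(2) by simp
      ultimately have "s = 0" by (simp add: mult_le_0_iff)
      then show ?thesis by simp
    qed
  next
    case False
    then have Mp: "real M > 0" and Dp: "real D > 0" by auto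
    have "real M * ((2 * A - real D) * real s) \<le> real M * (real D * L^2)"
      using l2 l2L by (simp add: mult_ac)
    then have "(2 * A - real D) * real s \<le> real D * L^2"
      using Mp by (simp add: mult_le_cancel_left)
    then show ?thesis using Dp by (simp add: divide_simps mult_ac)
  qed
  have "sqrt ((2 * A - real D) / real D * real s) \<le> sqrt (L^2)"
    using X by (rule real_sqrt_le_mono)
  also have "\<dots> = L" using L0 by simp
  finally show ?thesis using l2 unfolding L_def v_def s_def' by simp
qed

end
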